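(* Let $f(q)=q^{-1}+\sum_{k\geq1}a_kq^k$ be completely $(2{+})$-replicable with replicates $f^{[n]}(q)=q^{-1}+\sum_{k\geq1}a_k^{[n]}q^k$, $n\in\mathbb{N}\cup\sqrt{2}\mathbb{N}$. Then $$\sigma_2\Big(f^{[2]}(2z),\,f^{[\sqrt{2}]}(z),\,f^{[\sqrt{2}]}\big(z+\tfrac12\big),\,f\big(\tfrac{z}{2}\big),\,f\big(\tfrac{z+1}{2}\big)\Big)=2a_2f(z)-f^{[2]}(z)+2(a_4-a_1)+2a_2^{[\sqrt{2}]}-\big(f^{[\sqrt{2}]}(z)\big)^2,$$ where $\sigma_2(x_1,\dots,x_5)=\sum_{1\leq i<j\leq5}x_ix_j$ is the second elementary symmetric function.
   Context: Here $q=e^{2\pi iz}$ and a series $h(q)$ is also written $h(z)$; for integers $a,d>0$ and $b$, $h\big(\frac{az+b}{d}\big)$ denotes the formal series obtained by substituting $q\mapsto e^{2\pi ib/d}q^{a/d}$ (so e.g. $h(z+\frac12)$ means $q\mapsto -q$, $h(\frac{z+1}{2})$ means $q\mapsto -q^{1/2}$). Faber polynomials: for $h=q^{-1}+\sum_{k\geq1}c_kq^k$ with complex coefficients, $P_{n,h}(X)$ is the unique monic polynomial of degree $n$ with $P_{n,h}(h)-q^{-n}$ containing only positive powers of $q$. A series $h$ of this form is $(2{+})$-replicable with $(2{+})$-replicates $h^{[n]},h^{[n\sqrt{2}]}$ ($n\in\mathbb{N}$, series of the same form, $h^{[1]}=h$) if for every $n\geq1$ $$P_{n,h}(h)=\sum_{\substack{ad=n\\0\leq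 b<d}}h^{[a]}\Big(\frac{az+b}{d}\Big)+\sum_{\substack{ad=n\\ d\ \text{even}\\0\leq b<d}}h^{[a\sqrt{2}]}\Big(\frac{2az+b}{d}\Big).$$ $f$ is completely $(2{+})$-replicable with replicates $f^{[n]}$, $n\in\mathbb{N}\cup\sqrt{2}\mathbb{N}$ ($f^{[1]}=f$), if $f$ is $(2{+})$-replicable with these replicates and for every $n\in\mathbb{N}\cup\sqrt{2}\mathbb{N}$ the series $f^{[n]}$ is $(2{+})$-replicable with $(2{+})$-replicates $(f^{[n]})^{[m]}=f^{[mn]}$, $m\in\mathbb{N}\cup\sqrt{2}\mathbb{N}$. *)

theory Defs
  imports "HOL-Computational_Algebra.Computational_Algebra" "HOL-Analysis.Analysis"
begin

text \<open>A normalized series h = q^{-1} + sum_{k>=1} c k q^k is represented by its coefficient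
  function c (the value c 0 is ignored). As a formal Laurent series in q:\<close>

definition hser :: "(nat \<Rightarrow> complex) \<Rightarrow> complex fls" where
  "hser c = fls_X_intpow (-1) + fps_to_fls (Abs_fps (\<lambda>k. if k = 0 then 0 else c k))"

text \<open>Substitution q := zeta * t^m in a formal Laurent series g (m > 0): the coefficient of
  q^k gets multiplied by zeta^k and moved to t^(m k).\<close>

definition fls_subst :: "nat \<Rightarrow> complex \<Rightarrow> complex fls \<Rightarrow> complex fls" where
  "fls_subst m \<zeta> g = fls_compose_power (Abs_fls (\<lambda>k. \<zeta> powi k * fls_nth g k)) m"

definition rootu :: "nat \<Rightarrow> nat \<Rightarrow> complex" where
  "rootu b d = cis (2 * pi * real b / real d)"

definition is_faber :: "nat \<Rightarrow> (nat \<Rightarrow> complex) \<Rightarrow> complex poly \<Rightarrow> bool" where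
  "is_faber n c p \<longleftrightarrow> degree p = n \<and> lead_coeff p = 1 \<and>
     (\<forall>k \<le> 0. fls_nth (poly (map_poly fls_const p) (hser c) - fls_X_intpow (- int n)) k = 0)"

definition faber :: "nat \<Rightarrow> (nat \<Rightarrow> complex) \<Rightarrow> complex poly" where
  "faber n c = (THE p. is_faber n c p)"

text \<open>Replicates are indexed by (a, e): (a, False) stands for h^[a],
  (a, True) for h^[a sqrt 2]. The identity for n is written in the variable t = q^{1/n}:
  then q = t^n, and h^[a]((az+b)/d) (ad = n) is h^[a] with q := e^{2 pi i b/d} t^(a^2), and
  h^[a sqrt2]((2az+b)/d) is h^[a sqrt 2] with q := e^{2 pi i b/d} t^(2 a^2).\<close>

definition rep2plus :: "(nat \<Rightarrow> complex) \<Rightarrow> (nat \<Rightarrow> bool \<Rightarrow> (nat \<Rightarrow> complex)) \<Rightarrow> bool" where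
  "rep2plus h R \<longleftrightarrow> R 1 False = h \<and>
     (\<forall>n \<ge> 1. fls_subst n 1 (poly (map_poly fls_const (faber n h)) (hser h)) =
        (\<Sum>d \<in> {d. d dvd n}. \<Sum>b < d.
            fls_subst ((n div d)^2) (rootu b d) (hser (R (n div d) False)))
      + (\<Sum>d \<in> {d. d dvd n \<and> even d}. \<Sum>b < d.
            fls_subst (2 * (n div d)^2) (rootu b d) (hser (R (n div d) True))))"

text \<open>Complete (2+)-replicability: F n e is f^[n * (sqrt 2)^e]; the product of indices
  (m,e1)(n,e2) is (m n 2^{[e1 and e2]}, e1 xor e2).\<close>

definition completely_rep2plus :: "(nat \<Rightarrow> complex) \<Rightarrow> (nat \<Rightarrow> bool \<Rightarrow> (nat \<Rightarrow> complex)) \<Rightarrow> bool" where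
  "completely_rep2plus f F \<longleftrightarrow> F 1 False = f \<and>
     (\<forall>n e. n \<ge> 1 \<longrightarrow>
        rep2plus (F n e) (\<lambda>m e'. F (m * n * (if e \<and> e' then 2 else 1)) (e \<noteq> e')))"

definition sigma2 :: "'a::comm_ring list \<Rightarrow> 'a" where
  "sigma2 xs = (\<Sum>i < length xs. \<Sum>j < length xs. if i < j then xs ! i * xs ! j else 0)"

end

theory Submission
  imports Defs
begin

unbundle fps_syntax


lemma tw_nth: "Abs_fls (\<lambda>k. (\<zeta>::complex) powi k * g $$ k) $$ n = \<zeta> powi n * g $$ n"
proof -
  have "\<forall>\<^sub>\<infinity> n::nat. \<zeta> powi (- int n) * g $$ (- int n) = 0"
    using MOST_fls_neg_nth_eq_0[of g] by (rule eventually_mono) simp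
  thus ?thesis by simp
qed

lemma subst_nth:
  assumes "m > 0"
  shows "fls_subst m \<zeta> g $$ n = (if int m dvd n then \<zeta> powi (n div int m) * g $$ (n div int m) else 0)"
  using assms by (simp add: fls_subst_def fls_nth_compose_power tw_nth)

lemma subst_add: "m > 0 \<Longrightarrow> fls_subst m \<zeta> (f + g) = fls_subst m \<zeta> f + fls_subst m \<zeta> g"
  by (rule fls_eqI) (simp add: subst_nth algebra_simps)
lemma subst_diff: "m > 0 \<Longrightarrow> fls_subst m \<zeta> (f - g) = fls_subst m \<zeta> f - fls_subst m \<zeta> g"
  by (rule fls_eqI) (simp add: subst_nth algebra_simps)
lemma subst_const: "m > 0 \<Longrightarrow> fls_subst m \<zeta> (fls_const c) = fls_const c"
  by (rule fls_eqI) (auto simp add: subst_nth)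

lemma tw_subdeg:
  assumes "(\<zeta>::complex) \<noteq> 0"
  shows "fls_subdegree (Abs_fls (\<lambda>k. \<zeta> powi k * g $$ k)) = fls_subdegree g"
proof (cases "g = 0")
  case True
  hence "Abs_fls (\<lambda>k. \<zeta> powi k * g $$ k) = 0" by (intro fls_eqI) (simp add: tw_nth)
  thus ?thesis using True by simp
next
  case False
  have ne: "Abs_fls (\<lambda>k. \<zeta> powi k * g $$ k) \<noteq> 0"
    using False assms by (intro fls_nonzeroI[of _ "fls_subdegree g"]) (simp add: tw_nth)
  show ?thesis
  proof (rule antisym)
    show "fls_subdegree (Abs_fls (\<lambda>k. \<zeta> powi k * g $$ k)) \<le> fls_subdegree g"
      using False assms by (intro fls_subdegree_leI) (simp add: tw_nth)
    show "fls_subdegree g \<le> fls_subdegree (Abs_fls (\<lambda>k. \<zeta> powi k * g $$ k))"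
      using False assms ne by (intro fls_subdegree_geI) (simp_all add: tw_nth)
  qed
qed

lemma tw_mult:
  assumes "(\<zeta>::complex) \<noteq> 0"
  shows "Abs_fls (\<lambda>k. \<zeta> powi k * (f*g) $$ k) =
         Abs_fls (\<lambda>k. \<zeta> powi k * f $$ k) * Abs_fls (\<lambda>k. \<zeta> powi k * g $$ k)"
proof (rule fls_eqI)
  fix n
  have "(Abs_fls (\<lambda>k. \<zeta> powi k * f $$ k) * Abs_fls (\<lambda>k. \<zeta> powi k * g $$ k)) $$ n
     = (\<Sum>i=fls_subdegree f..n - fls_subdegree g. (\<zeta> powi i * f $$ i) * (\<zeta> powi (n-i) * g $$ (n - i)))"
    by (simp add: fls_times_nth(2) tw_subdeg[OF assms] tw_nth)
  also have "\<dots> = (\<Sum>i=fls_subdegree f..n - fls_subdegree g. \<zeta> powi n * (f $$ i * g $$ (n - i)))"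
  proof (rule sum.cong[OF refl])
    fix i
    have "\<zeta> powi (i + (n - i)) = \<zeta> powi i * \<zeta> powi (n - i)"
      using assms by (rule power_int_add[OF disjI1])
    hence "\<zeta> powi n = \<zeta> powi i * \<zeta> powi (n - i)" by simp
    thus "(\<zeta> powi i * f $$ i) * (\<zeta> powi (n-i) * g $$ (n - i)) = \<zeta> powi n * (f $$ i * g $$ (n - i))"
      by (simp add: algebra_simps)
  qed
  also have "\<dots> = \<zeta> powi n * (f*g) $$ n"
    by (simp add: fls_times_nth(2) sum_distrib_left)
  finally show "Abs_fls (\<lambda>k. \<zeta> powi k * (f*g) $$ k) $$ n =
         (Abs_fls (\<lambda>k. \<zeta> powi k * f $$ k) * Abs_fls (\<lambda>k. \<zeta> powi k * g $$ k)) $$ n"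
    by (simp add: tw_nth)
qed

lemma subst_mult: "m > 0 \<Longrightarrow> \<zeta> \<noteq> 0 \<Longrightarrow> fls_subst m \<zeta> (f * g) = fls_subst m \<zeta> f * fls_subst m \<zeta> g"
  by (simp add: fls_subst_def tw_mult)

lemma subst_power: "m > 0 \<Longrightarrow> \<zeta> \<noteq> 0 \<Longrightarrow> fls_subst m \<zeta> (f ^ k) = fls_subst m \<zeta> f ^ k"
  by (induction k) (simp_all add: subst_mult subst_const[where c=1, simplified])

lemma subst_comp:
  assumes "m > 0" "m' > 0"
  shows "fls_subst m' \<zeta>' (fls_subst m \<zeta> g) = fls_subst (m * m') (\<zeta> * \<zeta>' ^ m) g"
proof (rule fls_eqI)
  fix n
  show "fls_subst m' \<zeta>' (fls_subst m \<zeta> g) $$ n = fls_subst (m * m') (\<zeta> * \<zeta>' ^ m) g $$ n"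
  proof (cases "int (m*m') dvd n")
    case True
    then obtain k where k: "n = int (m*m') * k" by blast
    have e1: "n div int m' = int m * k" using k assms by simp
    have e2: "(int m * k) div int m = k" using assms by simp
    have e3: "n div int (m * m') = k" using k assms by simp
    have d1: "int m' dvd n" using k by (simp add: algebra_simps)
    have "\<zeta>' powi (int m * k) = (\<zeta>' powi int m) powi k"
      by (rule power_int_mult)
    hence "\<zeta>' powi (int m * k) = (\<zeta>' ^ m) powi k"
      by (simp only: power_int_of_nat)
    hence "\<zeta>' powi (int m * k) * (\<zeta> powi k * g $$ k) = (\<zeta> * \<zeta>' ^ m) powi k * g $$ k"
      by (simp add: power_int_mult_distrib)
    moreover have "fls_subst m' \<zeta>' (fls_subst m \<zeta> g) $$ n = \<zeta>' powi (int m * k) * (\<zeta> powi k * g $$ k)"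
      using assms by (simp only: subst_nth if_P[OF d1] e1 e2 dvd_triv_left if_True)
    moreover have "fls_subst (m * m') (\<zeta> * \<zeta>' ^ m) g $$ n = (\<zeta> * \<zeta>' ^ m) powi k * g $$ k"
      using assms True by (simp only: subst_nth if_P[OF True] e3 mult_pos_pos if_True)
    ultimately show ?thesis by simp
  next
    case False
    have nd: "\<not> (int m' dvd n \<and> int m dvd n div int m')"
    proof
      assume A: "int m' dvd n \<and> int m dvd n div int m'"
      then obtain a where a: "n = int m' * a" by blast
      with A assms have "int m dvd a" by simp
      then obtain b where "a = int m * b" by blast
      with a have "n = int (m*m') * b" by simp
      with False show False by simp
    qed
    have "fls_subst (m * m') (\<zeta> * \<zeta>' ^ m) g $$ n = 0"
      using False assms by (simp add: subst_nth)
    moreover have "fls_subst m' \<zeta>' (fls_subst m \<zeta> g) $$ n = 0"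
      using nd assms by (cases "int m' dvd n") (simp_all add: subst_nth)
    ultimately show ?thesis by simp
  qed
qed

lemma subst_11: "fls_subst 1 1 g = g"
  by (rule fls_eqI) (simp add: subst_nth)

lemma subst_inj:
  assumes "m > 0" "\<zeta> \<noteq> 0" "fls_subst m \<zeta> f = fls_subst m \<zeta> g"
  shows "f = g"
proof (rule fls_eqI)
  fix n
  have "fls_subst m \<zeta> f $$ (int m * n) = fls_subst m \<zeta> g $$ (int m * n)" using assms by simp
  moreover have "\<And>h. fls_subst m \<zeta> h $$ (int m * n) = \<zeta> powi n * h $$ n"
    using assms by (simp add: subst_nth)
  ultimately have "\<zeta> powi n * f $$ n = \<zeta> powi n * g $$ n" by simp
  thus "f $$ n = g $$ n" using assms by simp
qed



definition nonneg :: "complex fls \<Rightarrow> bool" where "nonneg f \<longleftrightarrow> (\<forall>k<0. f $$ k = 0)"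

lemma mult_low:
  fixes f g :: "complex fls"
  assumes "\<forall>i<a. f$$i = 0" "\<forall>j<b. g$$j = 0" "n < a + b"
  shows "(f*g)$$n = 0"
proof (cases "f = 0 \<or> g = 0")
  case True thus ?thesis by auto
next
  case False
  hence "a \<le> fls_subdegree f" "b \<le> fls_subdegree g"
    using assms(1,2) by (auto intro!: fls_subdegree_geI)
  thus ?thesis using assms(3) by (intro fls_times_nth_eq0) simp
qed

lemma nonneg_add[intro]: "nonneg f \<Longrightarrow> nonneg g \<Longrightarrow> nonneg (f+g)" by (simp add: nonneg_def)
lemma nonneg_diff[intro]: "nonneg f \<Longrightarrow> nonneg g \<Longrightarrow> nonneg (f-g)" by (simp add: nonneg_def)
lemma nonneg_mult[intro]: "nonneg f \<Longrightarrow> nonneg g \<Longrightarrow> nonneg (f*g)"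
  unfolding nonneg_def using mult_low[of 0 f 0 g] by auto
lemma nonneg_const[intro]: "nonneg (fls_const c)" by (simp add: nonneg_def)
lemma nonneg_numeral[intro]: "nonneg (numeral n)" by (simp add: nonneg_def)
lemma nonneg_one[intro]: "nonneg 1" by (simp add: nonneg_def)
lemma nonneg_X[intro]: "nonneg fls_X" by (simp add: nonneg_def)
lemma nonneg_fps[intro]: "nonneg (fps_to_fls F)" by (simp add: nonneg_def)
lemma nonneg_power[intro]: "nonneg f \<Longrightarrow> nonneg (f^k)" by (induction k) auto

lemma Xmul_nth: "(fls_X * f) $$ n = (f :: complex fls) $$ (n - 1)"
  by (simp add: fls_X_times_conv_shift)
lemma Xmul_nonneg_nth: "nonneg W \<Longrightarrow> n \<le> 0 \<Longrightarrow> (fls_X * W) $$ n = 0"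
  by (simp add: Xmul_nth nonneg_def)

lemma XY: "fls_X * (fls_X_intpow (-1) :: complex fls) = 1"
  by (simp add: fls_X_times_conv_shift)
lemma Ypow: "(fls_X_intpow (-1) :: complex fls) ^ n = fls_X_intpow (- int n)"
  using fls_X_intpow_power[of "-1" n] by simp

lemma fls_const_diff': "fls_const (a - b) = fls_const a - (fls_const b :: complex fls)"
  by (rule fls_eqI) simp
lemma fls_const_add': "fls_const (a + b) = fls_const a + (fls_const b :: complex fls)"
  by (rule fls_eqI) simp
lemma fls_const_mult': "fls_const (a * b) = fls_const a * (fls_const b :: complex fls)"
  by simp

definition Etail :: "(nat \<Rightarrow> complex) \<Rightarrow> complex fls" where
  "Etail c = fps_to_fls (Abs_fps (\<lambda>k. c (k+4)))"

lemma nonneg_Etail[intro]: "nonneg (Etail c)" by (simp add: Etail_def nonneg_fps)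

lemma hser_nth: "hser c $$ n = (if n = -1 then 1 else if n \<ge> 1 then c (nat n) else 0)"
  by (simp add: hser_def)

lemma hser_decomp:
  "hser c = fls_X_intpow (-1) + fls_X * (fls_const (c 1) + fls_X * (fls_const (c 2) +
            fls_X * (fls_const (c 3) + fls_X * Etail c)))"
proof (rule fls_eqI)
  fix n :: int
  consider "n \<le> 0" | "n = 1" | "n = 2" | "n = 3" | "n \<ge> 4" by linarith
  thus "hser c $$ n = (fls_X_intpow (-1) + fls_X * (fls_const (c 1) + fls_X * (fls_const (c 2) +
            fls_X * (fls_const (c 3) + fls_X * Etail c)))) $$ n"
  proof cases
    case 5
    hence "nat (n - 1 - 1 - 1 - 1) + 4 = nat n" by arith
    thus ?thesis using 5 by (simp add: hser_nth Xmul_nth Etail_def)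
  qed (auto simp: hser_nth Xmul_nth Etail_def)
qed

lemma poly_low:
  "(\<forall>k < - int (degree p). poly (map_poly fls_const p) (hser c) $$ k = 0) \<and>
   poly (map_poly fls_const p) (hser c) $$ (- int (degree p)) = lead_coeff p"
proof (induction p rule: pCons_induct)
  case 0 show ?case by simp
next
  case (pCons a p)
  define P where "P = poly (map_poly fls_const p) (hser c)"
  have ev: "poly (map_poly fls_const (pCons a p)) (hser c) = fls_const a + hser c * P"
    by (simp add: P_def map_poly_pCons)
  show ?case
  proof (cases "p = 0")
    case True
    have ev0: "poly (map_poly fls_const (pCons a p)) (hser c) = fls_const a"
      using ev True by (simp add: P_def)
    show ?thesis unfolding ev0 using True by simp
  next
    case False
    define d where "d = int (degree p)"
    define A where "A = fps_to_fls (Abs_fps (\<lambda>k. if k = 0 then 0 else c k))"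
    have deg: "int (degree (pCons a p)) = d + 1" using False by (simp add: d_def)
    have lc: "lead_coeff (pCons a p) = lead_coeff p" using False by simp
    have hs: "hser c = fls_X_intpow (-1) + A" by (simp add: hser_def A_def)
    have low: "\<forall>i<1. A $$ i = 0" by (simp add: A_def)
    have IH1: "\<forall>j < - d. P $$ j = 0" "P $$ (-d) = lead_coeff p"
      using pCons.IH by (auto simp: P_def d_def)
    have m0: "\<And>k. k < 1 - d \<Longrightarrow> (A * P) $$ k = 0" using mult_low[OF low IH1(1)] by simp
    have sh: "fls_X_intpow (-1) * P = fls_shift 1 P"
      using fls_X_intpow_times_conv_shift(1)[of "-1" P] by simp
    have hp: "\<And>k. (hser c * P) $$ k = P $$ (k+1) + (A * P) $$ k"
      unfolding hs distrib_right sh by simp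
    show ?thesis
    proof
      show "\<forall>k < - int (degree (pCons a p)). poly (map_poly fls_const (pCons a p)) (hser c) $$ k = 0"
      proof (intro allI impI)
        fix k assume "k < - int (degree (pCons a p))"
        hence k: "k < -(d+1)" using deg by simp
        hence "P $$ (k+1) = 0" "(A * P) $$ k = 0" "k \<noteq> 0" using IH1(1) m0 d_def by auto
        thus "poly (map_poly fls_const (pCons a p)) (hser c) $$ k = 0" by (simp add: ev hp)
      qed
      show "poly (map_poly fls_const (pCons a p)) (hser c) $$ (- int (degree (pCons a p))) =
            lead_coeff (pCons a p)"
      proof -
        have e: "- int (degree (pCons a p)) = -(d+1)" using deg by simp
        have "(A * P) $$ (-(d+1)) = 0" using m0[of "-(d+1)"] by simp
        moreover have "P $$ (-(d+1) + 1) = lead_coeff p" using IH1 by simp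
        moreover have "-(d+1) \<noteq> 0" using d_def by simp
        ultimately show ?thesis unfolding e lc ev by (simp add: hp)
      qed
    qed
  qed
qed

lemma map_poly_const_diff:
  "map_poly fls_const (p - q) = map_poly fls_const p - (map_poly fls_const q :: complex fls poly)"
  by (intro poly_eqI) (simp add: coeff_map_poly fls_const_diff')

lemma faber_eq:
  assumes "is_faber n c p"
  shows "faber n c = p"
proof -
  have uniq: "p' = p" if F': "is_faber n c p'" for p'
  proof (rule ccontr)
    assume ne: "p' \<noteq> p"
    define q where "q = p' - p"
    have qne: "q \<noteq> 0" using ne by (simp add: q_def)
    have dp: "degree p = n" "lead_coeff p = 1" using assms unfolding is_faber_def by auto
    have dp': "degree p' = n" "lead_coeff p' = 1" using F' unfolding is_faber_def by auto
    have cq: "coeff q n = 0" using dp dp' by (simp add: q_def)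
    have "degree q \<le> n" unfolding q_def by (rule degree_diff_le) (simp_all add: dp dp')
    hence dq: "degree q < n" using cq qne
      by (metis le_neq_implies_less leading_coeff_0_iff)
    define h where "h = hser c"
    have "poly (map_poly fls_const q) h =
          (poly (map_poly fls_const p') h - fls_X_intpow (- int n)) -
          (poly (map_poly fls_const p) h - fls_X_intpow (- int n))"
      by (simp add: q_def map_poly_const_diff)
    hence "poly (map_poly fls_const q) h $$ (- int (degree q)) = 0"
      using assms F' unfolding is_faber_def h_def by simp
    moreover have "poly (map_poly fls_const q) h $$ (- int (degree q)) = lead_coeff q"
      using poly_low[of q c] by (simp add: h_def)
    ultimately show False using qne by simp
  qed
  show ?thesis unfolding faber_def using assms uniq by (rule the_equality)
qed



lemma alg4:
  fixes x y h c1 c2 c3 e :: "'a::field_char_0"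
  assumes "x*y = 1" "h = y + x*(c1 + x*(c2 + x*(c3 + x*e)))"
  shows "h^4 - 4*c1*h^2 - 4*c2*h + (2*c1^2 - 4*c3) - y^4 =
    x * (4*e + 2*(c2 + c3*x + x^2*e)*(3*(c1 + x*(c2 + x*(c3 + x*e))) - c1)
         + 4*x*(c1 + x*(c2 + x*(c3 + x*e)))^3 + x^3*(c1 + x*(c2 + x*(c3 + x*e)))^4
         - 4*c1*x*(c1 + x*(c2 + x*(c3 + x*e)))^2 - 4*c2*(c1 + x*(c2 + x*(c3 + x*e))))"
  using assms(1) unfolding assms(2) by algebra

lemma alg2:
  fixes x y h c1 c2 c3 e :: "'a::field_char_0"
  assumes "x*y = 1" "h = y + x*(c1 + x*(c2 + x*(c3 + x*e)))"
  shows "h^2 - 2*c1 - y^2 =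
    x * (2*(c2 + c3*x + x^2*e) + x*(c1 + x*(c2 + x*(c3 + x*e)))^2)"
  using assms(1) unfolding assms(2) by algebra

lemma alg3:
  fixes x y h c1 c2 c3 e :: "'a::field_char_0"
  assumes "x*y = 1" "h = y + x*(c1 + x*(c2 + x*(c3 + x*e)))"
  shows "h^2 = y^2 + 2*c1 + x*(2*c2) + x*(x*(2*c3 + c1^2)) +
    x*(x*(x*(2*e + 2*c1*(c2 + x*(c3 + x*e)) + x*(c2 + x*(c3 + x*e))^2)))"
  using assms(1) unfolding assms(2) by algebra

lemma poly5: "poly (map_poly fls_const [:a0,a1,a2,a3,a4:]) (h :: complex fls) =
   fls_const a0 + h*(fls_const a1 + h*(fls_const a2 + h*(fls_const a3 + h*fls_const a4)))"
  by (simp add: map_poly_pCons)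
lemma poly3: "poly (map_poly fls_const [:a0,a1,a2:]) (h :: complex fls) =
   fls_const a0 + h*(fls_const a1 + h*fls_const a2)"
  by (simp add: map_poly_pCons)

lemma Y2: "fls_X_intpow (-1) ^ 2 = (fls_X_intpow (-2) :: complex fls)"
  using Ypow[of 2] by simp
lemma Y4: "fls_X_intpow (-1) ^ 4 = (fls_X_intpow (-4) :: complex fls)"
  using Ypow[of 4] by simp

lemma faber2_val: "poly (map_poly fls_const [:-(2 * c 1), 0, 1:]) (hser c) = hser c ^ 2 - fls_const (2 * c 1)"
  unfolding poly3 fls_const_uminus fls_const_0 fls_const_1 by algebra

lemma faber2: "faber 2 c = [:-(2 * c 1), 0, 1:]"
proof (rule faber_eq)
  define C1 C2 C3 where "C1 = fls_const (c 1)" and "C2 = fls_const (c 2)" and "C3 = fls_const (c 3)"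
  have "hser c ^ 2 - 2*C1 - fls_X_intpow (-1) ^ 2 = fls_X *
     (2*(C2 + C3*fls_X + fls_X^2*Etail c) + fls_X*(C1 + fls_X*(C2 + fls_X*(C3 + fls_X*Etail c)))^2)"
    by (rule alg2[OF XY]) (simp add: hser_decomp C1_def C2_def C3_def)
  moreover have "nonneg (2*(C2 + C3*fls_X + fls_X^2*Etail c) + fls_X*(C1 + fls_X*(C2 + fls_X*(C3 + fls_X*Etail c)))^2)"
    unfolding C1_def C2_def C3_def by (intro nonneg_add nonneg_mult nonneg_power nonneg_diff nonneg_const nonneg_X nonneg_Etail nonneg_numeral)+
  ultimately have "\<forall>k\<le>0. (hser c ^ 2 - 2*C1 - fls_X_intpow (-1) ^ 2) $$ k = 0"
    using Xmul_nonneg_nth by auto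
  moreover have "fls_const (2 * c 1) = 2 * C1" by (rule fls_eqI) (simp add: C1_def)
  ultimately show "is_faber 2 c [:-(2 * c 1), 0, 1:]"
    unfolding is_faber_def faber2_val Ypow[of 2, symmetric] by simp
qed

lemma faber4_val: "poly (map_poly fls_const [:2 * c 1 ^ 2 - 4 * c 3, -(4 * c 2), -(4 * c 1), 0, 1:]) (hser c)
   = hser c ^ 4 - 4 * fls_const (c 1) * hser c ^ 2 - 4 * fls_const (c 2) * hser c
     + (2 * fls_const (c 1) ^ 2 - 4 * fls_const (c 3))"
proof -
  have k0: "fls_const (2 * c 1 ^ 2 - 4 * c 3) = 2 * fls_const (c 1) ^ 2 - 4 * (fls_const (c 3) :: complex fls)"
    by (rule fls_eqI) (simp add: fls_const_power[symmetric])
  have k1: "fls_const (-(4 * c 2)) = - (4 * (fls_const (c 2) :: complex fls))"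
    by (rule fls_eqI) simp
  have k2: "fls_const (-(4 * c 1)) = - (4 * (fls_const (c 1) :: complex fls))"
    by (rule fls_eqI) simp
  show ?thesis unfolding poly5 k0 k1 k2 fls_const_0 fls_const_1 by algebra
qed

lemma faber4: "faber 4 c = [:2 * c 1 ^ 2 - 4 * c 3, -(4 * c 2), -(4 * c 1), 0, 1:]"
proof (rule faber_eq)
  define C1 C2 C3 where "C1 = fls_const (c 1)" and "C2 = fls_const (c 2)" and "C3 = fls_const (c 3)"
  define E where "E = Etail c"
  define X where "X = (fls_X :: complex fls)"
  define B where "B = C1 + X*(C2 + X*(C3 + X*E))"
  have "hser c ^ 4 - 4*C1*hser c ^ 2 - 4*C2*hser c + (2*C1^2 - 4*C3) - fls_X_intpow (-1) ^ 4 =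
    X * (4*E + 2*(C2 + C3*X + X^2*E)*(3*B - C1) + 4*X*B^3 + X^3*B^4 - 4*C1*X*B^2 - 4*C2*B)"
    unfolding B_def X_def by (rule alg4[OF XY]) (simp add: hser_decomp C1_def C2_def C3_def E_def)
  moreover have "nonneg (4*E + 2*(C2 + C3*X + X^2*E)*(3*B - C1) + 4*X*B^3 + X^3*B^4 - 4*C1*X*B^2 - 4*C2*B)"
    unfolding C1_def C2_def C3_def B_def X_def E_def by (intro nonneg_add nonneg_mult nonneg_power nonneg_diff nonneg_const nonneg_X nonneg_Etail nonneg_numeral)+
  ultimately have "\<forall>k\<le>0. (hser c ^ 4 - 4*C1*hser c ^ 2 - 4*C2*hser c + (2*C1^2 - 4*C3)
      - fls_X_intpow (-1) ^ 4) $$ k = 0"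
    using Xmul_nonneg_nth unfolding X_def by auto
  thus "is_faber 4 c [:2 * c 1 ^ 2 - 4 * c 3, -(4 * c 2), -(4 * c 1), 0, 1:]"
    unfolding is_faber_def faber4_val Ypow[of 4, symmetric] C1_def[symmetric] C2_def[symmetric]
      C3_def[symmetric] by simp
qed

lemma hsq_coeff2: "(hser c ^ 2) $$ 2 = 2 * c 3 + c 1 ^ 2"
proof -
  define C1 C2 C3 where "C1 = fls_const (c 1)" and "C2 = fls_const (c 2)" and "C3 = fls_const (c 3)"
  define X where "X = (fls_X :: complex fls)"
  define V where "V = 2*Etail c + 2*C1*(C2 + X*(C3 + X*Etail c)) + X*(C2 + X*(C3 + X*Etail c))^2"
  have eq: "hser c ^ 2 = fls_X_intpow (-1) ^ 2 + 2*C1 + X*(2*C2) + X*(X*(2*C3 + C1^2)) + X*(X*(X*V))"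
    unfolding V_def X_def by (rule alg3[OF XY]) (simp add: hser_decomp C1_def C2_def C3_def)
  have nV: "nonneg V" unfolding V_def C1_def C2_def C3_def X_def by (intro nonneg_add nonneg_mult nonneg_power nonneg_diff nonneg_const nonneg_X nonneg_Etail nonneg_numeral)+
  have "(X*(X*(X*V))) $$ 2 = 0" using nV by (simp add: X_def Xmul_nth nonneg_def)
  moreover have "(X*(X*(2*C3 + C1^2))) $$ 2 = 2 * c 3 + c 1 ^ 2"
    by (simp add: X_def Xmul_nth C1_def C3_def fls_const_power[symmetric])
  moreover have "(fls_X_intpow (-1) ^ 2 :: complex fls) $$ 2 = 0" unfolding Y2 by simp
  moreover have "(2*C1) $$ 2 = 0" "(X*(2*C2)) $$ 2 = 0" by (simp_all add: X_def Xmul_nth C1_def C2_def)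
  moreover have "(hser c ^ 2) $$ 2 = (fls_X_intpow (-1) ^ 2 :: complex fls) $$ 2 + (2*C1) $$ 2
     + (X*(2*C2)) $$ 2 + (X*(X*(2*C3 + C1^2))) $$ 2 + (X*(X*(X*V))) $$ 2"
    unfolding eq by (simp only: fls_plus_nth)
  ultimately show ?thesis by simp
qed



lemma div2: "{d::nat. d dvd 2} = {1,2}"
proof -
  have "d dvd 2 \<longleftrightarrow> d = 1 \<or> d = 2" for d :: nat
  proof
    assume "d dvd 2"
    hence "d \<le> 2" by (rule dvd_imp_le) simp
    moreover have "d \<noteq> 0" using \<open>d dvd 2\<close> by (cases "d = 0") auto
    ultimately show "d = 1 \<or> d = 2" by presburger
  qed auto
  thus ?thesis by auto
qed

lemma div2e: "{d::nat. d dvd 2 \<and> even d} = {2}"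
  using div2 by auto

lemma dvd4_iff: "d dvd 4 \<longleftrightarrow> d = 1 \<or> d = 2 \<or> d = (4::nat)"
proof
  assume "d dvd 4"
  hence "d \<le> 4" by (rule dvd_imp_le) simp
  moreover have "d \<noteq> 0" using \<open>d dvd 4\<close> by (cases "d = 0") auto
  moreover have "d \<noteq> 3" using \<open>d dvd 4\<close> by (cases "d = 3") auto
  ultimately show "d = 1 \<or> d = 2 \<or> d = 4" by presburger
qed auto

lemma div4: "{d::nat. d dvd 4} = {1,2,4}"
  using dvd4_iff by auto

lemma div4e: "{d::nat. d dvd 4 \<and> even d} = {2,4}"
  using dvd4_iff by auto

lemma sum2: "(\<Sum>b<(2::nat). g b) = g 0 + g 1"
  by (simp add: numeral_2_eq_2)
lemma sum4: "(\<Sum>b<(4::nat). g b) = g 0 + g 1 + g 2 + g 3"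
  by (simp add: eval_nat_numeral add.assoc)

lemma rootu0: "rootu 0 d = 1" by (simp add: rootu_def)
lemma rootu12: "rootu 1 2 = -1" by (simp add: rootu_def)
lemma rootu14: "rootu 1 4 = \<i>"
proof -
  have "2 * pi * real 1 / real 4 = pi / 2" by simp
  thus ?thesis by (simp add: rootu_def)
qed
lemma rootu24: "rootu 2 4 = -1"
proof -
  have "2 * pi * real 2 / real 4 = pi" by simp
  thus ?thesis by (simp add: rootu_def)
qed
lemma rootu34: "rootu 3 4 = -\<i>"
proof -
  have "rootu 3 4 = cis (pi + pi / 2)" unfolding rootu_def by (rule arg_cong[where f=cis]) simp
  also have "\<dots> = cis pi * cis (pi / 2)" by (simp only: cis_mult)
  finally show ?thesis by simp
qed

lemma sum1: "(\<Sum>b<(1::nat). g b) = g 0" by simp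
lemma sumset12: "(\<Sum>d\<in>{1::nat,2}. g d) = g 1 + g 2" by simp
lemma sumset124: "(\<Sum>d\<in>{1::nat,2,4}. g d) = g 1 + g 2 + g 4" by (simp add: add.assoc)
lemma sumset2: "(\<Sum>d\<in>{2::nat}. g d) = g 2" by simp
lemma sumset24: "(\<Sum>d\<in>{2::nat,4}. g d) = g 2 + g 4" by simp

lemma nums: "(2::nat) div 1 = 2" "(2::nat) div 2 = 1" "(4::nat) div 1 = 4" "(4::nat) div 2 = 2"
  "(4::nat) div 4 = 1" "(4::nat)^2 = 16" "(2::nat)^2 = 4" "(1::nat)^2 = 1" "2 * (4::nat) = 8"
  "2 * (1::nat) = 2" by simp_all

lemma subst_numeral: "m > 0 \<Longrightarrow> fls_subst m \<zeta> (numeral n) = numeral n"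
  using subst_const[of m \<zeta> "numeral n"] by simp

lemma rep_2:
  assumes "rep2plus h R"
  shows "fls_subst 2 1 (hser h ^ 2 - fls_const (2 * h 1)) =
    fls_subst 4 1 (hser (R 2 False)) + fls_subst 1 1 (hser (R 1 False)) + fls_subst 1 (-1) (hser (R 1 False))
    + fls_subst 2 1 (hser (R 1 True)) + fls_subst 2 (-1) (hser (R 1 True))"
proof -
  have H: "\<forall>n \<ge> 1. fls_subst n 1 (poly (map_poly fls_const (faber n h)) (hser h)) =
        (\<Sum>d \<in> {d. d dvd n}. \<Sum>b < d.
            fls_subst ((n div d)^2) (rootu b d) (hser (R (n div d) False)))
      + (\<Sum>d \<in> {d. d dvd n \<and> even d}. \<Sum>b < d.
            fls_subst (2 * (n div d)^2) (rootu b d) (hser (R (n div d) True)))"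
    using assms unfolding rep2plus_def by blast
  note E = H[rule_format, OF one_le_numeral]
  note E2 = E[of "num.Bit0 num.One", unfolded faber2 faber2_val div2 div2e]
  note E3 = E2[unfolded sumset12 sumset2 sum1 sum2 nums rootu0 rootu12]
  show ?thesis using E3 by (simp only: add.assoc)
qed

lemma rep_4:
  assumes "rep2plus h R"
  shows "fls_subst 4 1 (hser h ^ 4 - 4 * fls_const (h 1) * hser h ^ 2 - 4 * fls_const (h 2) * hser h
     + (2 * fls_const (h 1) ^ 2 - 4 * fls_const (h 3))) =
    fls_subst 16 1 (hser (R 4 False))
    + fls_subst 4 1 (hser (R 2 False)) + fls_subst 4 (-1) (hser (R 2 False))
    + fls_subst 1 1 (hser (R 1 False)) + fls_subst 1 \<i> (hser (R 1 False))
    + fls_subst 1 (-1) (hser (R 1 False)) + fls_subst 1 (-\<i>) (hser (R 1 False))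
    + fls_subst 8 1 (hser (R 2 True)) + fls_subst 8 (-1) (hser (R 2 True))
    + fls_subst 2 1 (hser (R 1 True)) + fls_subst 2 \<i> (hser (R 1 True))
    + fls_subst 2 (-1) (hser (R 1 True)) + fls_subst 2 (-\<i>) (hser (R 1 True))"
proof -
  have H: "\<forall>n \<ge> 1. fls_subst n 1 (poly (map_poly fls_const (faber n h)) (hser h)) =
        (\<Sum>d \<in> {d. d dvd n}. \<Sum>b < d.
            fls_subst ((n div d)^2) (rootu b d) (hser (R (n div d) False)))
      + (\<Sum>d \<in> {d. d dvd n \<and> even d}. \<Sum>b < d.
            fls_subst (2 * (n div d)^2) (rootu b d) (hser (R (n div d) True)))"
    using assms unfolding rep2plus_def by blast
  note E = H[rule_format, OF one_le_numeral]
  note E4 = E[of "num.Bit0 (num.Bit0 num.One)", unfolded faber4 faber4_val div4 div4e]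
  note E5 = E4[unfolded sumset124 sumset24 sum1 sum2 sum4 nums rootu0 rootu12 rootu14 rootu24 rootu34]
  show ?thesis using E5 by (simp only: add.assoc)
qed



lemma i4: "\<i> ^ 4 = 1"
  by (simp add: power_mult[of _ 2 2, simplified])

lemma sigma5: "sigma2 [a,b,c,d,e::'a::comm_ring] =
  a*b + a*c + a*d + a*e + b*c + b*d + b*e + c*d + c*e + d*e"
  by (simp add: sigma2_def eval_nat_numeral algebra_simps)

lemma final_alg:
  fixes a1 a2 a3 a4 a5 Fq H X16 M K1 K2 Q1 Q2 Qi Qmi Z1 Z2 Z3 Z4 c1 c2 c3 c4 c21 g1 g2 :: "'a::field_char_0"
  assumes e1: "a1+a2+a3+a4+a5 = Fq^2 - 2*c1"
   and s1: "a1^2 - 2*c21 = X16 + H + M + K1 + K2"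
   and s2: "a2^2 - 2*g1 = K1 + Q1 + Q2 + H + M"
   and s3: "a3^2 - 2*g1 = K1 + Qi + Qmi + M + H"
   and s4: "a4^2 - 2*c1 = H + Z1 + Z3 + Q1 + Q2"
   and s5: "a5^2 - 2*c1 = H + Z2 + Z4 + Q2 + Q1"
   and r4: "Fq^4 - 4*c1*Fq^2 - 4*c2*Fq + (2*c1^2 - 4*c3) = X16 + H + M + Z1 + Z2 + Z3 + Z4 + K1 + K2 + Q1 + Qi + Q2 + Qmi"
   and co: "2*c3 + c1^2 = c21 + 2*c4 + 2*g2"
  shows "a1*a2 + a1*a3 + a1*a4 + a1*a5 + a2*a3 + a2*a4 + a2*a5 + a3*a4 + a3*a5 + a4*a5
     = 2*c2*Fq - H + (2*(c4 - c1) + 2*g2) - a2^2"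
proof -
  have sq: "a1^2 + a2^2 + a3^2 + a4^2 + a5^2 =
     Fq^4 - 4*c1*Fq^2 - 4*c2*Fq + (2*c1^2 - 4*c3) + 2*c21 + 4*c1 + 2*H + 2*a2^2"
    using s1 s2 s3 s4 s5 r4 by (simp add: algebra_simps)
  have "2 * (a1*a2 + a1*a3 + a1*a4 + a1*a5 + a2*a3 + a2*a4 + a2*a5 + a3*a4 + a3*a5 + a4*a5)
      = (a1+a2+a3+a4+a5)^2 - (a1^2 + a2^2 + a3^2 + a4^2 + a5^2)"
    by (simp add: power2_eq_square algebra_simps)
  also have "\<dots> = (Fq^2 - 2*c1)^2 - (Fq^4 - 4*c1*Fq^2 - 4*c2*Fq + (2*c1^2 - 4*c3) + 2*c21 + 4*c1 + 2*H + 2*a2^2)"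
    unfolding e1 sq ..
  also have "\<dots> = 2 * (2*c2*Fq - H + (2*(c4 - c1) + 2*g2) - a2^2)"
    using co by algebra
  finally have *: "2 * (a1*a2 + a1*a3 + a1*a4 + a1*a5 + a2*a3 + a2*a4 + a2*a5 + a3*a4 + a3*a5 + a4*a5)
     = 2 * (2*c2*Fq - H + (2*(c4 - c1) + 2*g2) - a2^2)" .
  have "(2::'a) \<noteq> 0" by simp
  from mult_left_cancel[OF this] * show ?thesis by blast
qed

lemma fc2: "fls_const (2 * x) = 2 * (fls_const x :: complex fls)"
  by (rule fls_eqI) simp

theorem proposition4p11:
  fixes f :: "nat \<Rightarrow> complex" and F :: "nat \<Rightarrow> bool \<Rightarrow> (nat \<Rightarrow> complex)"
  assumes "completely_rep2plus f F"
  shows "sigma2 [fls_subst 4 1 (hser (F 2 False)),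
                 fls_subst 2 1 (hser (F 1 True)),
                 fls_subst 2 (-1) (hser (F 1 True)),
                 fls_subst 1 1 (hser f),
                 fls_subst 1 (-1) (hser f)]
       = fls_const (2 * f 2) * fls_subst 2 1 (hser f) - fls_subst 2 1 (hser (F 2 False))
         + fls_const (2 * (f 4 - f 1) + 2 * F 1 True 2)
         - (fls_subst 2 1 (hser (F 1 True)))^2"
proof -
  have C0: "F 1 False = f" using assms unfolding completely_rep2plus_def by blast
  have Rall: "\<And>n e. n \<ge> 1 \<Longrightarrow> rep2plus (F n e) (\<lambda>m e'. F (m * n * (if e \<and> e' then 2 else 1)) (e \<noteq> e'))"
    using assms unfolding completely_rep2plus_def by blast
  note Rf = Rall[of 1 False, OF order.refl, unfolded C0]
  note Rg = Rall[of 1 True, OF order.refl]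
  note R2 = Rall[of 2 False, OF one_le_numeral]
  define hf hg h2 hk h4 where "hf = hser f" and "hg = hser (F 1 True)" and "h2 = hser (F 2 False)"
    and "hk = hser (F 2 True)" and "h4 = hser (F 4 False)"
  define c1 c2 c3 c4 c21 g1 g2 where "c1 = (fls_const (f 1) :: complex fls)" and "c2 = (fls_const (f 2) :: complex fls)"
    and "c3 = (fls_const (f 3) :: complex fls)" and "c4 = (fls_const (f 4) :: complex fls)"
    and "c21 = (fls_const (F 2 False 1) :: complex fls)" and "g1 = (fls_const (F 1 True 1) :: complex fls)"
    and "g2 = (fls_const (F 1 True 2) :: complex fls)"
  note subs = subst_add subst_diff subst_mult subst_comp subst_power subst_const subst_numeral i4 fc2
  have Ef: "fls_subst 2 1 (hf^2 - 2 * c1) = fls_subst 4 1 h2 + fls_subst 1 1 hf + fls_subst 1 (-1) hf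
      + fls_subst 2 1 hg + fls_subst 2 (-1) hg"
    using rep_2[OF Rf] C0 by (simp add: hf_def hg_def h2_def c1_def fc2)
  have Eg: "fls_subst 2 1 (hg^2 - 2 * g1) = fls_subst 4 1 hk + fls_subst 1 1 hg + fls_subst 1 (-1) hg
      + fls_subst 2 1 h2 + fls_subst 2 (-1) h2"
    using rep_2[OF Rg] by (simp add: hk_def hg_def h2_def g1_def fc2)
  have E2: "fls_subst 2 1 (h2^2 - 2 * c21) = fls_subst 4 1 h4 + fls_subst 1 1 h2 + fls_subst 1 (-1) h2
      + fls_subst 2 1 hk + fls_subst 2 (-1) hk"
    using rep_2[OF R2] by (simp add: hk_def h4_def h2_def c21_def fc2)
  have E4: "fls_subst 4 1 (hf ^ 4 - 4 * c1 * hf ^ 2 - 4 * c2 * hf + (2 * c1 ^ 2 - 4 * c3)) =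
    fls_subst 16 1 h4 + fls_subst 4 1 h2 + fls_subst 4 (-1) h2
    + fls_subst 1 1 hf + fls_subst 1 \<i> hf + fls_subst 1 (-1) hf + fls_subst 1 (-\<i>) hf
    + fls_subst 8 1 hk + fls_subst 8 (-1) hk
    + fls_subst 2 1 hg + fls_subst 2 \<i> hg + fls_subst 2 (-1) hg + fls_subst 2 (-\<i>) hg"
    using rep_4[OF Rf] C0 by (simp add: hf_def hg_def h2_def hk_def h4_def c1_def c2_def c3_def)
  have co0: "2 * f 3 + f 1 ^ 2 = F 2 False 1 + 2 * f 4 + 2 * F 1 True 2"
  proof -
    have "(fls_subst 2 1 (hser f ^ 2 - fls_const (2 * f 1))) $$ 4 =
       (fls_subst 4 1 (hser (F 2 False)) + fls_subst 1 1 (hser f) + fls_subst 1 (-1) (hser f)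
      + fls_subst 2 1 (hser (F 1 True)) + fls_subst 2 (-1) (hser (F 1 True))) $$ 4"
      using Ef by (simp add: hf_def hg_def h2_def c1_def fc2)
    thus ?thesis by (simp add: subst_nth hser_nth hsq_coeff2)
  qed
  have e1: "fls_subst 8 1 h2 + fls_subst 4 1 hg + fls_subst 4 (-1) hg + fls_subst 2 1 hf + fls_subst 2 (-1) hf
      = (fls_subst 4 1 hf)^2 - 2*c1"
    using arg_cong[OF Ef, of "fls_subst 2 1"] by (simp add: subs c1_def)
  have s1: "(fls_subst 8 1 h2)^2 - 2*c21 = fls_subst 16 1 h4 + fls_subst 4 1 h2 + fls_subst 4 (-1) h2
      + fls_subst 8 1 hk + fls_subst 8 (-1) hk"
    using arg_cong[OF E2, of "fls_subst 4 1"] by (simp add: subs c21_def)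
  have s2: "(fls_subst 4 1 hg)^2 - 2*g1 = fls_subst 8 1 hk + fls_subst 2 1 hg + fls_subst 2 (-1) hg
      + fls_subst 4 1 h2 + fls_subst 4 (-1) h2"
    using arg_cong[OF Eg, of "fls_subst 2 1"] by (simp add: subs g1_def)
  have s3: "(fls_subst 4 (-1) hg)^2 - 2*g1 = fls_subst 8 1 hk + fls_subst 2 \<i> hg + fls_subst 2 (-\<i>) hg
      + fls_subst 4 (-1) h2 + fls_subst 4 1 h2"
    using arg_cong[OF Eg, of "fls_subst 2 \<i>"] by (simp add: subs g1_def)
  have s4: "(fls_subst 2 1 hf)^2 - 2*c1 = fls_subst 4 1 h2 + fls_subst 1 1 hf + fls_subst 1 (-1) hf
      + fls_subst 2 1 hg + fls_subst 2 (-1) hg"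
    using Ef by (simp add: subs c1_def)
  have s5: "(fls_subst 2 (-1) hf)^2 - 2*c1 = fls_subst 4 1 h2 + fls_subst 1 \<i> hf + fls_subst 1 (-\<i>) hf
      + fls_subst 2 (-1) hg + fls_subst 2 1 hg"
    using arg_cong[OF Ef, of "fls_subst 1 \<i>"] by (simp add: subs c1_def)
  have r4: "(fls_subst 4 1 hf)^4 - 4*c1*(fls_subst 4 1 hf)^2 - 4*c2*(fls_subst 4 1 hf) + (2*c1^2 - 4*c3) =
    fls_subst 16 1 h4 + fls_subst 4 1 h2 + fls_subst 4 (-1) h2
    + fls_subst 1 1 hf + fls_subst 1 \<i> hf + fls_subst 1 (-1) hf + fls_subst 1 (-\<i>) hf
    + fls_subst 8 1 hk + fls_subst 8 (-1) hk
    + fls_subst 2 1 hg + fls_subst 2 \<i> hg + fls_subst 2 (-1) hg + fls_subst 2 (-\<i>) hg"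
    using E4 by (simp add: subs c1_def c2_def c3_def)
  have co: "2*c3 + c1^2 = c21 + 2*c4 + 2*g2"
  proof -
    have "fls_const (2 * f 3 + f 1 ^ 2) = (fls_const (F 2 False 1 + 2 * f 4 + 2 * F 1 True 2) :: complex fls)"
      by (simp only: co0)
    thus ?thesis unfolding c1_def c3_def c21_def c4_def g2_def
      by (simp add: fls_const_add' fc2 fls_const_power)
  qed
  note main = final_alg[OF e1 s1 s2 s3 s4 s5 r4 co]
  have k1: "fls_const (2 * f 2) = 2 * c2" by (simp add: c2_def fc2)
  have k2: "fls_const (2 * (f 4 - f 1) + 2 * F 1 True 2) = 2*(c4 - c1) + 2*g2"
    by (simp add: c4_def c1_def g2_def fc2 fls_const_add' fls_const_diff')
  show ?thesis
  proof (rule subst_inj[where m=2 and \<zeta>=1])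
    show "fls_subst 2 1 (sigma2 [fls_subst 4 1 (hser (F 2 False)),
                 fls_subst 2 1 (hser (F 1 True)),
                 fls_subst 2 (-1) (hser (F 1 True)),
                 fls_subst 1 1 (hser f),
                 fls_subst 1 (-1) (hser f)]) =
      fls_subst 2 1 (fls_const (2 * f 2) * fls_subst 2 1 (hser f) - fls_subst 2 1 (hser (F 2 False))
         + fls_const (2 * (f 4 - f 1) + 2 * F 1 True 2)
         - (fls_subst 2 1 (hser (F 1 True)))^2)"
      unfolding sigma5 k1 k2 using main
      by (simp add: subs hf_def hg_def h2_def hk_def h4_def c1_def c2_def c4_def g2_def)
  qed simp_all
qed

end
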